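(* Define binary words by $a_0=0$, $b_0=1$, $a_{n+1}=a_nb_n$, $b_{n+1}=b_na_n$ (so $|a_n|=2^n$). For every integer $u>0$ and every $n$ with $u\le |a_n|/4$, among the positions $i\in\{1,\ldots,2^n-u\}$ there are at least $2^n/4$ positions where the $i$-th and $(i+u)$-th bits of $a_n$ coincide and at least $2^n/4$ positions where they differ. *)

theory Defs
  imports Complex_Main
begin

(* Thue--Morse type words: a_0 = 0, b_0 = 1, a_{n+1} = a_n b_n, b_{n+1} = b_n a_n.
   Words are lists of bits (0/1 as nat); the i-th bit (1-indexed) of w is w ! (i - 1). *)
fun tm_a :: "nat \<Rightarrow> nat list" and tm_b :: "nat \<Rightarrow> nat list" where
  "tm_a 0 = [0]"
| "tm_b 0 = [1]"
| "tm_a (Suc n) = tm_a n @ tm_b n"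
| "tm_b (Suc n) = tm_b n @ tm_a n"

end

theory Submission
  imports Defs
begin

fun tt :: "nat \<Rightarrow> bool" where
  "tt 0 = False"
| "tt (Suc k) = (tt (Suc k div 2) \<noteq> odd (Suc k))"

lemma tt_S: "tt (Suc k) = (tt (Suc k div 2) \<noteq> odd (Suc k))"
  by (rule tt.simps(2))

declare tt.simps(2)[simp del]

lemma tt_even: "tt (2*j) = tt j"
proof (cases j)
  case 0 then show ?thesis by simp
next
  case (Suc m)
  have a: "2*j = Suc (2*m+1)" using Suc by simp
  have b: "Suc (2*m+1) div 2 = j" "\<not> odd (Suc (2*m+1))" using Suc by auto
  show ?thesis unfolding a tt_S b by simp
qed

lemma tt_odd: "tt (2*j+1) = (\<not> tt j)"
proof -
  have a: "2*j+1 = Suc (2*j)" by simp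
  have b: "Suc (2*j) div 2 = j" "odd (Suc (2*j))" by auto
  show ?thesis unfolding a tt_S b by simp
qed

lemma tt1: "tt 1" using tt_odd[of 0] by simp

lemma tt_pow: "j < 2^n \<Longrightarrow> tt (2^n + j) = (\<not> tt j)"
proof (induction n arbitrary: j)
  case 0
  then show ?case using tt1 by simp
next
  case (Suc n)
  obtain i r where j: "j = 2*i + r" and r: "r < 2" by (metis mod_less_divisor mult_div_mod_eq zero_less_numeral)
  have i: "i < 2^n" using Suc.prems j by auto
  have e: "2^Suc n + j = 2*(2^n + i) + r" using j by simp
  show ?case
  proof (cases "r = 0")
    case True
    then show ?thesis using e j tt_even[of i] tt_even[of "2^n+i"] Suc.IH[OF i] by simp
  next
    case False
    then have "r = 1" using r by simp
    then show ?thesis using e j tt_odd[of "2^n+i"] tt_odd[of i] Suc.IH[OF i] by simp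
  qed
qed

lemma len_tm: "length (tm_a n) = 2^n \<and> length (tm_b n) = 2^n"
  by (induction n) auto

lemma tm_tt: "k < 2^n \<Longrightarrow> tm_a n ! k = (if tt k then 1 else 0) \<and> tm_b n ! k = (if tt k then 0 else 1)"
proof (induction n arbitrary: k)
  case 0
  then show ?case by simp
next
  case (Suc n)
  show ?case
  proof (cases "k < 2^n")
    case True
    then show ?thesis using Suc.IH[OF True] len_tm[of n] by (simp add: nth_append)
  next
    case False
    define j where "j = k - 2^n"
    have j: "j < 2^n" "k = 2^n + j" using False Suc.prems j_def by auto
    show ?thesis using Suc.IH[OF j(1)] len_tm[of n] tt_pow[OF j(1)] j by (simp add: nth_append)
  qed
qed

lemma sum_split: "(\<Sum>k<(L::nat). f k) = (\<Sum>j<(L+1) div 2. f (2*j)) + (\<Sum>j<L div 2. f (2*j+1))"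
proof (induction L)
  case 0
  then show ?case by simp
next
  case (Suc L)
  show ?case
  proof (cases "even L")
    case True
    then obtain m where m: "L = 2*m" by blast
    have a: "(Suc L + 1) div 2 = Suc m" "(L+1) div 2 = m" "Suc L div 2 = m" "L div 2 = m" using m by auto
    show ?thesis using Suc.IH unfolding a by (simp add: m add_ac)
  next
    case False
    then obtain m where m: "L = 2*m+1" using oddE by blast
    have a: "(Suc L + 1) div 2 = Suc m" "(L+1) div 2 = Suc m" "Suc L div 2 = Suc m" "L div 2 = m" using m by auto
    show ?thesis using Suc.IH unfolding a by (simp add: m add_ac)
  qed
qed

definition D :: "nat \<Rightarrow> nat \<Rightarrow> nat" where
  "D L u = (\<Sum>k<L. if tt k \<noteq> tt (k+u) then 1 else 0)"
definition E :: "nat \<Rightarrow> nat \<Rightarrow> nat" where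
  "E L u = (\<Sum>k<L. if tt k = tt (k+u) then 1 else 0)"

lemma tt_oS: "tt (Suc (2*j)) = (\<not> tt j)" using tt_odd by simp
lemma tt_e2: "tt (2*j + 2*v) = tt (j+v)"
  by (metis distrib_left tt_even)
lemma tt_o2: "tt (Suc (2*j + 2*v)) = (\<not> tt (j+v))"
proof -
  have e: "Suc (2*j + 2*v) = 2*(j+v)+1" by simp
  show ?thesis unfolding e by (rule tt_odd)
qed
lemma tt_o4: "tt (Suc (Suc (2*j + 2*v))) = tt (Suc (j+v))"
proof -
  have "Suc (Suc (2*j + 2*v)) = 2*(Suc (j+v))" by simp
  then show ?thesis using tt_even by metis
qed

lemma D_even: "D L (2*v) = D ((L+1) div 2) v + D (L div 2) v"
  unfolding D_def by (subst sum_split) (auto simp add: tt_e2 tt_o2 tt_o4 tt_oS tt_even intro!: sum.cong)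

lemma E_even: "E L (2*v) = E ((L+1) div 2) v + E (L div 2) v"
  unfolding E_def by (subst sum_split) (auto simp add: tt_e2 tt_o2 tt_o4 tt_oS tt_even intro!: sum.cong)

lemma D_odd: "D L (2*v+1) = E ((L+1) div 2) v + E (L div 2) (v+1)"
  unfolding D_def E_def by (subst sum_split) (auto simp add: tt_e2 tt_o2 tt_o4 tt_oS tt_even intro!: sum.cong)

lemma E_odd: "E L (2*v+1) = D ((L+1) div 2) v + D (L div 2) (v+1)"
  unfolding D_def E_def by (subst sum_split) (auto simp add: tt_e2 tt_o2 tt_o4 tt_oS tt_even intro!: sum.cong)

lemma E0: "E L 0 = L" unfolding E_def by simp
lemma D0: "D L 0 = 0" unfolding D_def by simp

lemma D1: "(L+1) div 2 \<le> D L 1"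
  using D_odd[of L 0] E0 by simp

lemma main_bound: "0 < u \<Longrightarrow> 4*u \<le> 2^n \<Longrightarrow> 2^n \<le> 4 * D (2^n-u) u \<and> 2^n \<le> 4 * E (2^n-u) u"
proof (induction n arbitrary: u)
  case 0
  then show ?case by simp
next
  case (Suc n)
  show ?case
  proof (cases "even u")
    case True
    then obtain v where u: "u = 2*v" by blast
    have v: "0 < v" "4*v \<le> 2^n" using Suc.prems u by auto
    have L: "2^Suc n - u = 2*(2^n - v)" using u by (simp add: diff_mult_distrib2)
    have h1: "(2*(2^n-v) + 1) div 2 = 2^n - v" "2*(2^n-v) div 2 = 2^n - v" by auto
    have dd: "D (2^Suc n - u) u = D (2^n-v) v + D (2^n-v) v"
    proof -
      have "D (2^Suc n - u) u = D (2*(2^n-v)) (2*v)" using L u by simp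
      also have "\<dots> = D (2^n-v) v + D (2^n-v) v" by (simp only: D_even h1)
      finally show ?thesis .
    qed
    have ee: "E (2^Suc n - u) u = E (2^n-v) v + E (2^n-v) v"
    proof -
      have "E (2^Suc n - u) u = E (2*(2^n-v)) (2*v)" using L u by simp
      also have "\<dots> = E (2^n-v) v + E (2^n-v) v" by (simp only: E_even h1)
      finally show ?thesis .
    qed
    show ?thesis using Suc.IH[OF v] unfolding dd ee by simp
  next
    case False
    then obtain v where u: "u = 2*v+1" using oddE by blast
    have vlt: "v < 2^n" using Suc.prems u by simp
    have L: "2^Suc n - u = 2*(2^n - v) - 1" using u by (simp add: diff_mult_distrib2)
    have h1: "(2*(2^n-v) - 1 + 1) div 2 = 2^n - v" "(2*(2^n-v) - 1) div 2 = 2^n - v - 1" using vlt by auto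
    have dd: "D (2^Suc n - u) u = E (2^n-v) v + E (2^n-v-1) (v+1)"
    proof -
      have "D (2^Suc n - u) u = D (2*(2^n-v) - 1) (2*v+1)" using L u by simp
      also have "\<dots> = E (2^n-v) v + E (2^n-v-1) (v+1)" by (simp only: D_odd h1)
      finally show ?thesis .
    qed
    have ee: "E (2^Suc n - u) u = D (2^n-v) v + D (2^n-v-1) (v+1)"
    proof -
      have "E (2^Suc n - u) u = E (2*(2^n-v) - 1) (2*v+1)" using L u by simp
      also have "\<dots> = D (2^n-v) v + D (2^n-v-1) (v+1)" by (simp only: E_odd h1)
      finally show ?thesis .
    qed
    have n1: "n \<ge> 1"
    proof (rule ccontr)
      assume "\<not> n \<ge> 1" then have "n = 0" by simp
      then show False using Suc.prems u by simp
    qed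
    show ?thesis
    proof (cases "v = 0")
      case True
      have d1: "2^n div 2 \<le> D (2^n - 1) 1" using D1[of "2^n - 1"] by simp
      have p: "2 * (2^n div 2) = (2::nat)^n" using n1
      proof -
        have "(2::nat)^n = 2 * 2^(n-1)" using n1 by (metis Suc_diff_1 less_le_trans zero_less_one power_Suc)
        then show ?thesis by simp
      qed
      show ?thesis unfolding dd ee using True d1 p by (simp add: E0 D0)
    next
      case False
      have n2: "n \<ge> 2"
      proof (rule ccontr)
        assume "\<not> n \<ge> 2" then have "n = 1" using n1 by simp
        then show False using Suc.prems u False by simp
      qed
      have "(4::nat) dvd 2^n" using n2
      proof -
        have e: "n = (n-2)+2" using n2 by simp
        have "(2::nat)^n = 2^(n-2) * 2^2" by (subst e, rule power_add)
        then show ?thesis by simp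
      qed
      then obtain k where k: "2^n = 4*(k::nat)" by blast
      have "4 + 8*v \<le> 8*k" using Suc.prems u k by simp
      then have a: "4*(v+1) \<le> 2^n" unfolding k by presburger
      have b: "4*v \<le> 2^n" using a by simp
      have e: "2^n - v - 1 = 2^n - (v+1)" by simp
      show ?thesis using Suc.IH[OF _ a] Suc.IH[OF _ b] False unfolding dd ee e by simp
    qed
  qed
qed

lemma count_eq: "card {k \<in> {..<(m::nat)}. P k} = (\<Sum>k<m. if P k then 1 else 0)"
proof -
  have "(\<Sum>k<m. (if P k then 1 else 0::nat)) = (\<Sum>k<m. of_bool (P k))" by (rule sum.cong) auto
  also have "\<dots> = card ({..<m} \<inter> {k. P k})" by simp
  also have "{..<m} \<inter> {k. P k} = {k \<in> {..<m}. P k}" by blast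
  finally show ?thesis by simp
qed

lemma card_shift: "card {i \<in> {1..(M::nat)}. Q (i - 1)} = card {k \<in> {..<M}. Q k}"
proof -
  have "{i \<in> {1..M}. Q (i - 1)} = Suc ` {k \<in> {..<M}. Q k}"
  proof
    show "{i \<in> {1..M}. Q (i - 1)} \<subseteq> Suc ` {k \<in> {..<M}. Q k}"
    proof
      fix i assume i: "i \<in> {i \<in> {1..M}. Q (i - 1)}"
      then have "i = Suc (i - 1)" "i - 1 \<in> {k \<in> {..<M}. Q k}" by auto
      then show "i \<in> Suc ` {k \<in> {..<M}. Q k}" by (metis image_eqI)
    qed
  qed auto
  then show ?thesis by (simp add: card_image)
qed

theorem mainTheorem4:
  fixes u n :: nat
  assumes "u > 0"
    and "real u \<le> real (length (tm_a n)) / 4"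
  shows "real (card {i \<in> {1..2^n - u}. tm_a n ! (i - 1) = tm_a n ! (i + u - 1)}) \<ge> (2::real)^n / 4
       \<and> real (card {i \<in> {1..2^n - u}. tm_a n ! (i - 1) \<noteq> tm_a n ! (i + u - 1)}) \<ge> (2::real)^n / 4"
proof -
  have "real (4*u) \<le> real (2^n)" using assms(2) len_tm[of n] by simp
  then have u4: "4*u \<le> 2^n" by (simp only: of_nat_le_iff)
  have eqv: "(tm_a n ! k = tm_a n ! (k + u)) = (tt k = tt (k+u))" if "k < 2^n - u" for k
    using tm_tt[of k n] tm_tt[of "k+u" n] that by auto
  have c1: "card {i \<in> {1..2^n - u}. tm_a n ! (i - 1) = tm_a n ! (i + u - 1)} = E (2^n-u) u"
  proof -
    have "card {i \<in> {1..2^n - u}. tm_a n ! (i - 1) = tm_a n ! (i + u - 1)}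
        = card {i \<in> {1..2^n - u}. (\<lambda>k. tm_a n ! k = tm_a n ! (k + u)) (i - 1)}"
      by (rule arg_cong[where f=card]) auto
    also have "\<dots> = card {k \<in> {..<2^n-u}. tm_a n ! k = tm_a n ! (k + u)}" by (rule card_shift)
    also have "\<dots> = card {k \<in> {..<2^n-u}. tt k = tt (k+u)}"
      by (rule arg_cong[where f=card]) (auto simp: eqv)
    finally show ?thesis unfolding E_def count_eq .
  qed
  have c2: "card {i \<in> {1..2^n - u}. tm_a n ! (i - 1) \<noteq> tm_a n ! (i + u - 1)} = D (2^n-u) u"
  proof -
    have "card {i \<in> {1..2^n - u}. tm_a n ! (i - 1) \<noteq> tm_a n ! (i + u - 1)}
        = card {i \<in> {1..2^n - u}. (\<lambda>k. tm_a n ! k \<noteq> tm_a n ! (k + u)) (i - 1)}"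
      by (rule arg_cong[where f=card]) auto
    also have "\<dots> = card {k \<in> {..<2^n-u}. tm_a n ! k \<noteq> tm_a n ! (k + u)}" by (rule card_shift)
    also have "\<dots> = card {k \<in> {..<2^n-u}. tt k \<noteq> tt (k+u)}"
      by (rule arg_cong[where f=card]) (auto simp: eqv)
    finally show ?thesis unfolding D_def count_eq .
  qed
  have m: "2^n \<le> 4 * D (2^n-u) u \<and> 2^n \<le> 4 * E (2^n-u) u" using main_bound[OF assms(1) u4] .
  have r1: "(2::real)^n \<le> 4 * real (D (2^n-u) u)" proof -
    have "real (2^n) \<le> real (4 * D (2^n-u) u)" using m by (simp only: of_nat_le_iff)
    then show ?thesis by simp
  qed
  have r2: "(2::real)^n \<le> 4 * real (E (2^n-u) u)" proof -
    have "real (2^n) \<le> real (4 * E (2^n-u) u)" using m by (simp only: of_nat_le_iff)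
    then show ?thesis by simp
  qed
  show ?thesis unfolding c1 c2 using r1 r2 by simp
qed

end
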